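(* Let $u,v\in\mathbb{Z}[i]$ with $\gcd(u,v)\in U$ and $uv\equiv0\pmod{1+i}$. Then there exist $x,y\in\mathbb{Z}[i]$ with $\gcd(x,y)\in U$ satisfying $x-y=u+v$ and $xy=iuv$ if and only if the quadratic equation $z^2-(u+v)z-iuv=0$ has a solution $z\in\mathbb{Z}[i]$.
   Context: $\mathbb{Z}[i]$ is the ring of Gaussian integers, $U=\{1,-1,i,-i\}$ its unit group. $\gcd(x,y)\in U$ means $x,y$ have no common non-unit divisor. *)

theory Defs
  imports Complex_Main
begin

definition gauss_ints :: "complex set" where
  "gauss_ints = {z. Re z \<in> \<int> \<and> Im z \<in> \<int>}"

definition gdvd :: "complex \<Rightarrow> complex \<Rightarrow> bool" where
  "gdvd a b \<longleftrightarrow> (\<exists>c\<in>gauss_ints. b = a * c)"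

definition gunits :: "complex set" where
  "gunits = {1, -1, \<i>, -\<i>}"

text \<open>gcd(x,y) in U: x and y have no common non-unit divisor in Z[i].\<close>
definition gcoprime :: "complex \<Rightarrow> complex \<Rightarrow> bool" where
  "gcoprime x y \<longleftrightarrow> (\<forall>d\<in>gauss_ints. gdvd d x \<and> gdvd d y \<longrightarrow> d \<in> gunits)"

end

theory Submission
  imports Defs
begin

lemma gi_iff: "z \<in> gauss_ints \<longleftrightarrow> Re z \<in> \<int> \<and> Im z \<in> \<int>"
  by (simp add: gauss_ints_def)

lemma gi_add[intro]: "a \<in> gauss_ints \<Longrightarrow> b \<in> gauss_ints \<Longrightarrow> a + b \<in> gauss_ints"
  by (simp add: gi_iff)
lemma gi_diff[intro]: "a \<in> gauss_ints \<Longrightarrow> b \<in> gauss_ints \<Longrightarrow> a - b \<in> gauss_ints"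
  by (simp add: gi_iff)
lemma gi_mult[intro]: "a \<in> gauss_ints \<Longrightarrow> b \<in> gauss_ints \<Longrightarrow> a * b \<in> gauss_ints"
  by (simp add: gi_iff)
lemma gi_uminus[intro]: "a \<in> gauss_ints \<Longrightarrow> - a \<in> gauss_ints"
  by (simp add: gi_iff)
lemma gi_cnj[intro]: "a \<in> gauss_ints \<Longrightarrow> cnj a \<in> gauss_ints"
  by (simp add: gi_iff)
lemma gi_1[simp,intro]: "1 \<in> gauss_ints" and gi_0[simp,intro]: "0 \<in> gauss_ints"
  and gi_i[simp,intro]: "\<i> \<in> gauss_ints" and gi_2[simp,intro]: "2 \<in> gauss_ints"
  by (simp_all add: gi_iff)

lemma gi_unit:
  assumes d: "d \<in> gauss_ints" and c: "c \<in> gauss_ints" and e: "d * c = 1"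
  shows "d \<in> gunits"
proof -
  obtain a where a: "Re d = of_int a" using d by (auto simp: gi_iff elim!: Ints_cases)
  obtain b where b: "Im d = of_int b" using d by (auto simp: gi_iff elim!: Ints_cases)
  obtain p where p: "Re c = of_int p" using c by (auto simp: gi_iff elim!: Ints_cases)
  obtain q where q: "Im c = of_int q" using c by (auto simp: gi_iff elim!: Ints_cases)
  have "Re (d*c) = 1" "Im (d*c) = 0" using e by auto
  hence r1: "a*p - b*q = 1" and r2: "a*q + b*p = 0" using a b p q
    by (simp_all, metis of_int_eq_iff of_int_diff of_int_mult of_int_1,
        metis of_int_eq_iff of_int_add of_int_mult of_int_0)
  have "(a^2+b^2)*(p^2+q^2) = (a*p - b*q)^2 + (a*q+b*p)^2"
    by (simp add: algebra_simps power2_eq_square)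
  also have "\<dots> = 1" using r1 r2 by simp
  finally have "(a^2+b^2)*(p^2+q^2) = 1" .
  moreover have "a^2+b^2 \<ge> 0" "p^2+q^2 \<ge> 0" by simp_all
  ultimately have n: "a^2+b^2 = 1"
    by (metis pos_zmult_eq_1_iff_lemma zero_le_mult_iff zero_less_mult_iff
         mult.commute  order_le_less mult_eq_0_iff zero_neq_one pos_zmult_eq_1_iff)
  have "a^2 \<le> 1" "b^2 \<le> 1" using n zero_le_power2[of a] zero_le_power2[of b] by linarith+
  hence "\<bar>a\<bar> \<le> 1" "\<bar>b\<bar> \<le> 1"
    by (metis abs_le_square_iff abs_one one_power2)+
  hence "a \<in> {-1,0,1}" "b \<in> {-1,0,1}" by auto
  with n have "(a,b) \<in> {(1,0),(-1,0),(0,1),(0,-1)}" by auto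
  thus ?thesis using a b unfolding gunits_def
    by (auto simp: complex_eq_iff)
qed

lemma gi_normsq:
  assumes "z \<in> gauss_ints" shows "\<exists>n::nat. (Re z)^2 + (Im z)^2 = real n"
proof -
  obtain a where a: "Re z = of_int a" using assms by (auto simp: gi_iff elim!: Ints_cases)
  obtain b where b: "Im z = of_int b" using assms by (auto simp: gi_iff elim!: Ints_cases)
  have "(Re z)^2 + (Im z)^2 = real_of_int (a^2+b^2)" using a b by simp
  also have "\<dots> = real (nat (a^2+b^2))" by simp
  finally show ?thesis by blast
qed

lemma sq_half: "\<bar>x::real\<bar> \<le> 1/2 \<Longrightarrow> x^2 \<le> 1/4"
proof -
  assume h: "\<bar>x\<bar> \<le> 1/2"
  have "x^2 = \<bar>x\<bar>^2" by simp
  also have "\<dots> \<le> (1/2)^2" using h by (intro power_mono) auto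
  finally show ?thesis by (simp add: power2_eq_square)
qed

lemma gi_div:
  assumes g: "g \<in> gauss_ints" "g \<noteq> 0" and u: "u \<in> gauss_ints"
  shows "\<exists>q\<in>gauss_ints. (Re (u - q*g))^2 + (Im (u - q*g))^2 < (Re g)^2 + (Im g)^2"
proof -
  define w where "w = u / g"
  define q where "q = Complex (of_int (round (Re w))) (of_int (round (Im w)))"
  have q: "q \<in> gauss_ints" by (simp add: q_def gi_iff)
  have h1: "\<bar>Re (w - q)\<bar> \<le> 1/2" using of_int_round_abs_le[of "Re w"]
    by (simp add: q_def abs_minus_commute)
  have h2: "\<bar>Im (w - q)\<bar> \<le> 1/2" using of_int_round_abs_le[of "Im w"]
    by (simp add: q_def abs_minus_commute)
  have "(cmod (w - q))^2 = (Re (w-q))^2 + (Im (w-q))^2" by (rule cmod_power2)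
  also have "\<dots> \<le> 1/4 + 1/4"
    using h1 h2 by (intro add_mono sq_half)
  finally have "(cmod (w - q))^2 < 1" by simp
  hence "(cmod (w - q))^2 * (cmod g)^2 < 1 * (cmod g)^2"
    using g by (intro mult_strict_right_mono) auto
  moreover have "u - q*g = (w - q) * g" using g by (simp add: w_def field_simps)
  ultimately have "(cmod (u - q*g))^2 < (cmod g)^2" by (simp add: norm_mult power_mult_distrib)
  thus ?thesis using q by (auto simp: cmod_power2)
qed

definition NS :: "complex \<Rightarrow> real" where "NS z = (Re z)^2 + (Im z)^2"

lemma NS_zero: "NS z = 0 \<longleftrightarrow> z = 0"
  by (simp add: NS_def complex_eq_iff)

lemma gi_bezout:
  assumes u: "u \<in> gauss_ints" and v: "v \<in> gauss_ints" and cp: "gcoprime u v"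
  shows "\<exists>a\<in>gauss_ints. \<exists>b\<in>gauss_ints. a*u + b*v = 1"
proof -
  define P where "P n \<longleftrightarrow> (\<exists>a\<in>gauss_ints. \<exists>b\<in>gauss_ints. a*u+b*v \<noteq> 0 \<and> NS (a*u+b*v) = real n)" for n :: nat
  have nz: "u \<noteq> 0 \<or> v \<noteq> 0"
  proof (rule ccontr)
    assume "\<not> ?thesis"
    hence "gdvd 0 u" "gdvd 0 v" by (auto simp: gdvd_def)
    with cp have "(0::complex) \<in> gunits" unfolding gcoprime_def by blast
    thus False by (simp add: gunits_def)
  qed
  have "\<exists>n. P n"
  proof (cases "u \<noteq> 0")
    case True
    obtain n where "NS (1*u+0*v) = real n" using gi_normsq[OF u] by (auto simp: NS_def)
    thus ?thesis using True unfolding P_def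
      by (intro exI[of _ n] bexI[of _ 1] bexI[of _ 0]) auto
  next
    case False
    with nz have "v \<noteq> 0" by simp
    obtain n where "NS (0*u+1*v) = real n" using gi_normsq[OF v] by (auto simp: NS_def)
    thus ?thesis using \<open>v \<noteq> 0\<close> unfolding P_def
      by (intro exI[of _ n] bexI[of _ 0] bexI[of _ 1]) auto
  qed
  define m where "m = (LEAST n. P n)"
  have Pm: "P m" unfolding m_def using \<open>\<exists>n. P n\<close> by (metis LeastI_ex)
  have minm: "\<And>n. P n \<Longrightarrow> m \<le> n" unfolding m_def by (rule Least_le)
  obtain a b where a: "a \<in> gauss_ints" and b: "b \<in> gauss_ints" and gnz: "a*u+b*v \<noteq> 0"
    and gm: "NS (a*u+b*v) = real m" using Pm unfolding P_def by blast
  define g where "g = a*u+b*v"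
  have g: "g \<in> gauss_ints" using a b u v by (auto simp: g_def)
  have dv: "gdvd g t" if t: "t \<in> gauss_ints" and
    t_comb: "\<exists>c\<in>gauss_ints. \<exists>e\<in>gauss_ints. t = c*u+e*v" for t
  proof -
    obtain c e where c: "c \<in> gauss_ints" and e: "e \<in> gauss_ints" and te: "t = c*u+e*v"
      using t_comb by blast
    obtain q where q: "q \<in> gauss_ints" and lt: "NS (t - q*g) < NS g"
      using gi_div[OF g _ t] gnz by (auto simp: g_def NS_def)
    have r: "t - q*g = (c - q*a)*u + (e - q*b)*v" by (simp add: te g_def algebra_simps)
    have "t - q*g = 0"
    proof (rule ccontr)
      assume rnz: "t - q*g \<noteq> 0"
      obtain n where n: "NS (t - q*g) = real n"
        using gi_normsq[of "t - q*g"] t q g by (auto simp: NS_def)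
      have "P n" unfolding P_def
        using rnz n r c e q a b by (intro bexI[of _ "c - q*a"] bexI[of _ "e - q*b"]) auto
      hence "m \<le> n" by (rule minm)
      moreover have "n < m" using lt n gm by (simp add: g_def)
      ultimately show False by simp
    qed
    hence "t = g * q" by (simp add: algebra_simps)
    thus ?thesis using q by (auto simp: gdvd_def)
  qed
  have "gdvd g u" using dv[OF u] by (metis add_0_right gi_0 gi_1 mult_1 mult_zero_left)
  moreover have "gdvd g v" using dv[OF v] by (metis add_0 gi_0 gi_1 mult_1 mult_zero_left)
  ultimately have "g \<in> gunits" using cp g unfolding gcoprime_def by blast
  hence "cnj g * g = 1" by (auto simp: gunits_def complex_eq_iff)
  hence "(cnj g * a) * u + (cnj g * b) * v = 1" by (simp add: g_def algebra_simps)
  thus ?thesis using a b g by blast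
qed

theorem proposition4p21:
  fixes u v :: complex
  assumes "u \<in> gauss_ints" and "v \<in> gauss_ints"
    and "gcoprime u v"
    and "gdvd (1 + \<i>) (u * v)"
  shows "(\<exists>x\<in>gauss_ints. \<exists>y\<in>gauss_ints.
            gcoprime x y \<and> x - y = u + v \<and> x * y = \<i> * u * v)
         \<longleftrightarrow> (\<exists>z\<in>gauss_ints. z ^ 2 - (u + v) * z - \<i> * u * v = 0)"
proof
  assume "\<exists>x\<in>gauss_ints. \<exists>y\<in>gauss_ints.
            gcoprime x y \<and> x - y = u + v \<and> x * y = \<i> * u * v"
  then obtain x y where x: "x \<in> gauss_ints" and h1: "x - y = u + v" and h2: "x * y = \<i> * u * v"
    by blast
  have "x ^ 2 - (u + v) * x - \<i> * u * v = x^2 - (x - y) * x - x * y"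
    by (simp add: h1 h2)
  also have "\<dots> = 0" by (simp add: power2_eq_square algebra_simps)
  finally show "\<exists>z\<in>gauss_ints. z ^ 2 - (u + v) * z - \<i> * u * v = 0" using x by blast
next
  assume "\<exists>z\<in>gauss_ints. z ^ 2 - (u + v) * z - \<i> * u * v = 0"
  then obtain z where z: "z \<in> gauss_ints" and eq: "z ^ 2 - (u + v) * z - \<i> * u * v = 0" by blast
  obtain a b where a: "a \<in> gauss_ints" and b: "b \<in> gauss_ints" and ab: "a*u + b*v = 1"
    using gi_bezout assms(1-3) by blast
  define y where "y = z - (u + v)"
  have y: "y \<in> gauss_ints" using z assms by (auto simp: y_def)
  have xy: "z * y = \<i> * u * v" using eq by (simp add: y_def power2_eq_square algebra_simps)
  have "gcoprime z y" unfolding gcoprime_def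
  proof (intro ballI impI)
    fix d assume d: "d \<in> gauss_ints" and dd: "gdvd d z \<and> gdvd d y"
    then obtain c1 c2 where c1: "c1 \<in> gauss_ints" "z = d*c1" and c2: "c2 \<in> gauss_ints" "y = d*c2"
      by (auto simp: gdvd_def)
    define e where "e = c1 - c2"
    define f where "f = - \<i> * d * c1 * c2"
    have ue: "u + v = d * e" using c1 c2 by (simp add: e_def y_def algebra_simps)
    have uf: "u * v = d * f"
    proof -
      have "\<i> * (u*v) = d*d*c1*c2" using xy c1 c2 by (simp add: algebra_simps)
      hence "-\<i> * (\<i> * (u*v)) = -\<i> * (d*d*c1*c2)" by simp
      thus ?thesis by (simp add: f_def algebra_simps)
    qed
    have "1 = (a*u + b*v)^2" using ab by simp
    also have "\<dots> = a*a*(u*(u+v) - u*v) + 2*a*b*(u*v) + b*b*(v*(u+v) - u*v)"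
      by (simp add: power2_eq_square algebra_simps)
    also have "\<dots> = d * (a*a*(u*e - f) + 2*a*b*f + b*b*(v*e - f))"
      by (simp add: ue uf algebra_simps)
    finally have "d * (a*a*(u*e - f) + 2*a*b*f + b*b*(v*e - f)) = 1" by simp
    moreover have "a*a*(u*e - f) + 2*a*b*f + b*b*(v*e - f) \<in> gauss_ints"
    proof -
      have ef1: "e \<in> gauss_ints" using c1 c2 unfolding e_def by blast
      have ef2: "f \<in> gauss_ints" using d c1 c2 unfolding f_def
        by (intro gi_mult gi_uminus gi_i)
      note ef = ef1 ef2
      show ?thesis using a b assms(1,2) ef by (intro gi_add gi_diff gi_mult gi_2)
    qed
    ultimately show "d \<in> gunits" using gi_unit[OF d] by blast
  qed
  moreover have "z - y = u + v" by (simp add: y_def)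
  ultimately show "\<exists>x\<in>gauss_ints. \<exists>y\<in>gauss_ints.
            gcoprime x y \<and> x - y = u + v \<and> x * y = \<i> * u * v"
    using z y xy by blast
qed

end
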